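(* Let $(I_t)_{t\in\mathbb{Z}}$ be a stochastic process such that there exists a family $(I_t^n)_{t\in\mathbb{Z}}$, $n\in\mathbb{N}$, of $\{0,1\}$-valued stationary stochastic processes with $P(I_0^n=1)>0$ for all $n$ and $$\mathcal{L}\bigl((I_t^n)_{t\in\{-u,\dots,v\}}\mid I_0^n=1\bigr)\Longrightarrow \mathcal{L}\bigl((I_t)_{t\in\{-u,\dots,v\}}\bigr)\quad (n\to\infty)$$ for all $u,v\in\mathbb{N}$. Let $C=\{t\in\mathbb{Z}: I_t=1\}$. (a) Let $A\subset\mathbb{Z}$ with $0\in A$. Then $P(C=A)=P(C=A-a)$ for all $a\in A$, where $A-a:=\{t\in\mathbb{Z}: a+t\in A\}$. (b) Let $A\subset\mathbb{Z}$ with $0\in A$ and let $t_1,t_2\in\mathbb{Z}$ with $t_1\le 0\le t_2$. Then $$P\bigl(C\cap[t_1,t_2]=A\cap[t_1,t_2]\bigr)=P\bigl(C\cap[t_1-a,t_2-a]=(A-a)\cap[t_1-a,t_2-a]\bigr)$$ for all $a\in A\cap[t_1,t_2]$.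
   Context: $\mathcal{L}(\cdot\mid\cdot)$ denotes conditional law and $\Longrightarrow$ convergence in distribution. Intervals $[t_1,t_2]$ are understood as subsets of $\mathbb{Z}$. *)

theory Defs
  imports "HOL-Probability.Probability"
begin

definition window :: "nat \<Rightarrow> nat \<Rightarrow> (int \<Rightarrow> 'a \<Rightarrow> bool) \<Rightarrow> 'a \<Rightarrow> (int \<Rightarrow> bool)" where
  "window u v X \<omega> = (\<lambda>t. if t \<in> {- int u .. int v} then X t \<omega> else False)"

definition bool_process :: "'a measure \<Rightarrow> (int \<Rightarrow> 'a \<Rightarrow> bool) \<Rightarrow> bool" where
  "bool_process M X \<longleftrightarrow> (\<forall>t. X t \<in> measurable M (count_space UNIV))"

definition stationary :: "'a measure \<Rightarrow> (int \<Rightarrow> 'a \<Rightarrow> bool) \<Rightarrow> bool" where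
  "stationary M X \<longleftrightarrow> (\<forall>s::int.
     distr M (PiM UNIV (\<lambda>_. count_space UNIV)) (\<lambda>\<omega> t. X (t + s) \<omega>) =
     distr M (PiM UNIV (\<lambda>_. count_space UNIV)) (\<lambda>\<omega> t. X t \<omega>))"

definition cond_expect :: "'a measure \<Rightarrow> 'a set \<Rightarrow> ('a \<Rightarrow> real) \<Rightarrow> real" where
  "cond_expect M B g = (\<integral>\<omega>. g \<omega> * indicator B \<omega> \<partial>M) / measure M B"

text \<open>The window takes values in the finite
  discrete space {0,1}^{-u..v}, on which every real function is bounded and continuous, so
  weak convergence means convergence of the expectations of all functions of the window.\<close>
definition cond_window_conv ::
  "(nat \<Rightarrow> 'b measure) \<Rightarrow> (nat \<Rightarrow> int \<Rightarrow> 'b \<Rightarrow> bool) \<Rightarrow> 'a measure \<Rightarrow> (int \<Rightarrow> 'a \<Rightarrow> bool) \<Rightarrow> bool" where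
  "cond_window_conv Mn Xn M X \<longleftrightarrow>
     (\<forall>u v. \<forall>f :: (int \<Rightarrow> bool) \<Rightarrow> real.
        (\<lambda>n. cond_expect (Mn n) {\<omega> \<in> space (Mn n). Xn n 0 \<omega>} (\<lambda>\<omega>. f (window u v (Xn n) \<omega>)))
          \<longlonglongrightarrow> (\<integral>\<omega>. f (window u v X \<omega>) \<partial>M))"

definition shift_set :: "int set \<Rightarrow> int \<Rightarrow> int set" where
  "shift_set A a = {t. a + t \<in> A}"

end

theory Submission
  imports Defs
begin

lemma ev_sets:
  fixes T :: "int set"
  assumes "\<And>t. X t \<in> measurable M (count_space UNIV)"
  shows "{\<omega>\<in>space M. \<forall>t\<in>T. X t \<omega> = P t} \<in> sets M"
proof -
  have "\<And>t. {\<omega>\<in>space M. X t \<omega> = P t} \<in> sets M"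
  proof -
    fix t
    have "{\<omega>\<in>space M. X t \<omega> = P t} = X t -` {P t} \<inter> space M" by auto
    thus "{\<omega>\<in>space M. X t \<omega> = P t} \<in> sets M" using measurable_sets[OF assms] by simp
  qed
  thus ?thesis by (rule sets.sets_Collect_countable_Ball)
qed

definition pat :: "int set \<Rightarrow> int set \<Rightarrow> (int \<Rightarrow> bool) \<Rightarrow> real" where
  "pat J A w = (if \<forall>t\<in>J. w t = (t \<in> A) then 1 else 0)"

lemma integral_pat:
  assumes "J \<subseteq> {- int u .. int v}"
  shows "(\<integral>\<omega>. pat J A (window u v X \<omega>) \<partial>M) = measure M {\<omega>\<in>space M. \<forall>t\<in>J. X t \<omega> = (t\<in>A)}"
proof -
  let ?E = "{\<omega>\<in>space M. \<forall>t\<in>J. X t \<omega> = (t\<in>A)}"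
  have "(\<integral>\<omega>. pat J A (window u v X \<omega>) \<partial>M) = (\<integral>\<omega>. indicator ?E \<omega> \<partial>M)"
    apply (rule Bochner_Integration.integral_cong[OF refl])
    using assms by (auto simp: pat_def window_def indicator_def subset_iff)
  also have "\<dots> = measure M ?E" by (simp add: Int_absorb2)
  finally show ?thesis .
qed

lemma cond_pat:
  assumes "J \<subseteq> {- int u .. int v}" "0 \<in> J" "0 \<in> A"
  shows "cond_expect M {\<omega>\<in>space M. X 0 \<omega>} (\<lambda>\<omega>. pat J A (window u v X \<omega>)) =
     measure M {\<omega>\<in>space M. \<forall>t\<in>J. X t \<omega> = (t\<in>A)} / measure M {\<omega>\<in>space M. X 0 \<omega>}"
proof -
  let ?E = "{\<omega>\<in>space M. \<forall>t\<in>J. X t \<omega> = (t\<in>A)}"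
  have "(\<integral>\<omega>. pat J A (window u v X \<omega>) * indicator {\<omega>\<in>space M. X 0 \<omega>} \<omega> \<partial>M) = (\<integral>\<omega>. indicator ?E \<omega> \<partial>M)"
    apply (rule Bochner_Integration.integral_cong[OF refl])
    using assms by (auto simp: pat_def window_def indicator_def subset_iff)
  also have "\<dots> = measure M ?E" by (simp add: Int_absorb2)
  finally show ?thesis unfolding cond_expect_def by simp
qed

lemma stat_shift:
  assumes "bool_process M X" "stationary M X" "a \<in> {t1..t2}"
  shows "measure M {\<omega>\<in>space M. \<forall>t\<in>{t1..t2}. X t \<omega> = (t\<in>A)} =
         measure M {\<omega>\<in>space M. \<forall>t\<in>{t1-a..t2-a}. X t \<omega> = (t\<in>shift_set A a)}"
proof -
  let ?P = "PiM UNIV (\<lambda>_::int. count_space (UNIV::bool set))"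
  let ?S = "{f\<in>space ?P. \<forall>t\<in>{t1-a..t2-a}. f t = (t\<in>shift_set A a)}"
  have S: "?S \<in> sets ?P"
    by (rule ev_sets) (rule measurable_component_singleton, simp)
  have Xm: "\<And>t. X t \<in> measurable M (count_space UNIV)" using assms(1) by (simp add: bool_process_def)
  have h1: "(\<lambda>\<omega> t. X (t + a) \<omega>) \<in> measurable M ?P"
    by (rule measurable_PiM_single') (auto simp: Xm)
  have h2: "(\<lambda>\<omega> t. X t \<omega>) \<in> measurable M ?P"
    by (rule measurable_PiM_single') (auto simp: Xm)
  have eq: "distr M ?P (\<lambda>\<omega> t. X (t + a) \<omega>) = distr M ?P (\<lambda>\<omega> t. X t \<omega>)"
    using assms(2) by (simp add: stationary_def)
  have "measure M {\<omega>\<in>space M. \<forall>t\<in>{t1..t2}. X t \<omega> = (t\<in>A)} = measure M ((\<lambda>\<omega> t. X (t + a) \<omega>) -` ?S \<inter> space M)"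
  proof -
    have "{\<omega>\<in>space M. \<forall>t\<in>{t1..t2}. X t \<omega> = (t\<in>A)} = (\<lambda>\<omega> t. X (t + a) \<omega>) -` ?S \<inter> space M"
    proof (intro set_eqI iffI)
      fix \<omega> assume "\<omega> \<in> {\<omega>\<in>space M. \<forall>t\<in>{t1..t2}. X t \<omega> = (t\<in>A)}"
      thus "\<omega> \<in> (\<lambda>\<omega> t. X (t + a) \<omega>) -` ?S \<inter> space M"
        by (auto simp: space_PiM shift_set_def add.commute)
    next
      fix \<omega> assume a: "\<omega> \<in> (\<lambda>\<omega> t. X (t + a) \<omega>) -` ?S \<inter> space M"
      show "\<omega> \<in> {\<omega>\<in>space M. \<forall>t\<in>{t1..t2}. X t \<omega> = (t\<in>A)}"
      proof (intro CollectI conjI ballI)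
        show "\<omega> \<in> space M" using a by auto
      next
        fix t :: int assume t: "t \<in> {t1..t2}"
        have all: "\<forall>s\<in>{t1-a..t2-a}. X (s + a) \<omega> = (s \<in> shift_set A a)" using a by simp
        show "X t \<omega> = (t \<in> A)" using bspec[OF all, of "t-a"] t by (simp add: shift_set_def)
      qed
    qed
    thus ?thesis by simp
  qed
  also have "\<dots> = measure (distr M ?P (\<lambda>\<omega> t. X (t + a) \<omega>)) ?S"
    by (rule measure_distr[symmetric, OF h1 S])
  also have "\<dots> = measure (distr M ?P (\<lambda>\<omega> t. X t \<omega>)) ?S" by (simp only: eq)
  also have "\<dots> = measure M ((\<lambda>\<omega> t. X t \<omega>) -` ?S \<inter> space M)"
    by (rule measure_distr[OF h2 S])
  also have "(\<lambda>\<omega> t. X t \<omega>) -` ?S \<inter> space M = {\<omega>\<in>space M. \<forall>t\<in>{t1-a..t2-a}. X t \<omega> = (t\<in>shift_set A a)}"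
    by (auto simp: space_PiM)
  finally show ?thesis .
qed


lemma core:
  fixes M :: "'a measure" and I :: "int \<Rightarrow> 'a \<Rightarrow> bool"
    and Mn :: "nat \<Rightarrow> 'b measure" and In :: "nat \<Rightarrow> int \<Rightarrow> 'b \<Rightarrow> bool"
  assumes "\<And>n. bool_process (Mn n) (In n)"
    and "\<And>n. stationary (Mn n) (In n)"
    and conv: "cond_window_conv Mn In M I"
    and "0 \<in> A" "t1 \<le> 0" "0 \<le> t2" "a \<in> A" "a \<in> {t1..t2}"
  shows "measure M {\<omega>\<in>space M. \<forall>t\<in>{t1..t2}. I t \<omega> = (t\<in>A)} =
         measure M {\<omega>\<in>space M. \<forall>t\<in>{t1-a..t2-a}. I t \<omega> = (t\<in>shift_set A a)}"
proof -
  define u where "u = nat (\<bar>t1\<bar> + \<bar>a\<bar>)"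
  define v where "v = nat (\<bar>t2\<bar> + \<bar>a\<bar>)"
  have uu: "int u = \<bar>t1\<bar> + \<bar>a\<bar>" "int v = \<bar>t2\<bar> + \<bar>a\<bar>" unfolding u_def v_def by simp_all
  have J1: "{t1..t2} \<subseteq> {- int u .. int v}" unfolding uu by (intro subsetI) (simp, arith)
  have J2: "{t1-a..t2-a} \<subseteq> {- int u .. int v}" unfolding uu by (intro subsetI) (simp, arith)
  have z1: "0 \<in> {t1..t2}" using assms by auto
  have z2: "0 \<in> {t1-a..t2-a}" using assms by auto
  have z3: "0 \<in> shift_set A a" using assms by (simp add: shift_set_def)
  let ?B = "\<lambda>n. {\<omega> \<in> space (Mn n). In n 0 \<omega>}"
  have L1: "(\<lambda>n. cond_expect (Mn n) (?B n) (\<lambda>\<omega>. pat {t1..t2} A (window u v (In n) \<omega>)))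
      \<longlonglongrightarrow> (\<integral>\<omega>. pat {t1..t2} A (window u v I \<omega>) \<partial>M)"
    using conv unfolding cond_window_conv_def by blast
  have L2: "(\<lambda>n. cond_expect (Mn n) (?B n) (\<lambda>\<omega>. pat {t1-a..t2-a} (shift_set A a) (window u v (In n) \<omega>)))
      \<longlonglongrightarrow> (\<integral>\<omega>. pat {t1-a..t2-a} (shift_set A a) (window u v I \<omega>) \<partial>M)"
    using conv unfolding cond_window_conv_def by blast
  have eqs: "\<And>n. cond_expect (Mn n) (?B n) (\<lambda>\<omega>. pat {t1..t2} A (window u v (In n) \<omega>)) =
     cond_expect (Mn n) (?B n) (\<lambda>\<omega>. pat {t1-a..t2-a} (shift_set A a) (window u v (In n) \<omega>))"
    by (simp only: cond_pat[OF J1 z1 assms(4)] cond_pat[OF J2 z2 z3] stat_shift[OF assms(1,2) assms(8)])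
  have "(\<integral>\<omega>. pat {t1..t2} A (window u v I \<omega>) \<partial>M) = (\<integral>\<omega>. pat {t1-a..t2-a} (shift_set A a) (window u v I \<omega>) \<partial>M)"
  proof -
    have L1': "(\<lambda>n. cond_expect (Mn n) (?B n) (\<lambda>\<omega>. pat {t1-a..t2-a} (shift_set A a) (window u v (In n) \<omega>)))
      \<longlonglongrightarrow> (\<integral>\<omega>. pat {t1..t2} A (window u v I \<omega>) \<partial>M)"
      using L1 by (simp only: eqs)
    show ?thesis by (rule LIMSEQ_unique[OF L1' L2])
  qed
  thus ?thesis by (simp only: integral_pat[OF J1] integral_pat[OF J2])
qed

theorem corollary2p2:
  fixes M :: "'a measure" and I :: "int \<Rightarrow> 'a \<Rightarrow> bool"
    and Mn :: "nat \<Rightarrow> 'b measure" and In :: "nat \<Rightarrow> int \<Rightarrow> 'b \<Rightarrow> bool"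
  assumes "prob_space M" and "bool_process M I"
    and "\<And>n. prob_space (Mn n)"
    and "\<And>n. bool_process (Mn n) (In n)"
    and "\<And>n. stationary (Mn n) (In n)"
    and "\<And>n. measure (Mn n) {\<omega> \<in> space (Mn n). In n 0 \<omega>} > 0"
    and "cond_window_conv Mn In M I"
  defines "C \<equiv> (\<lambda>\<omega>. {t. I t \<omega>})"
  shows "(\<forall>A a. 0 \<in> A \<longrightarrow> a \<in> A \<longrightarrow>
            measure M {\<omega> \<in> space M. C \<omega> = A} =
            measure M {\<omega> \<in> space M. C \<omega> = shift_set A a})
       \<and> (\<forall>A a t1 t2. 0 \<in> A \<longrightarrow> t1 \<le> 0 \<longrightarrow> 0 \<le> t2 \<longrightarrow> a \<in> A \<inter> {t1..t2} \<longrightarrow>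
            measure M {\<omega> \<in> space M. C \<omega> \<inter> {t1..t2} = A \<inter> {t1..t2}} =
            measure M {\<omega> \<in> space M. C \<omega> \<inter> {t1 - a..t2 - a} = shift_set A a \<inter> {t1 - a..t2 - a}})"
proof -
  have setJ: "\<And>\<omega> J B. (C \<omega> \<inter> J = B \<inter> J) = (\<forall>t\<in>J. I t \<omega> = (t \<in> B))"
    unfolding C_def by blast
  have setU: "\<And>\<omega> B. (C \<omega> = B) = (\<forall>t\<in>UNIV. I t \<omega> = (t \<in> B))"
    unfolding C_def by blast
  have B: "\<And>A a t1 t2. 0 \<in> A \<Longrightarrow> t1 \<le> 0 \<Longrightarrow> 0 \<le> t2 \<Longrightarrow> a \<in> A \<Longrightarrow> a \<in> {t1..t2} \<Longrightarrow>
            measure M {\<omega> \<in> space M. \<forall>t\<in>{t1..t2}. I t \<omega> = (t\<in>A)} =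
            measure M {\<omega> \<in> space M. \<forall>t\<in>{t1-a..t2-a}. I t \<omega> = (t\<in>shift_set A a)}"
    by (rule core[OF assms(4,5,7)])
  have Xm: "\<And>t. I t \<in> measurable M (count_space UNIV)" using assms(2) by (simp add: bool_process_def)
  interpret P: prob_space M by (rule assms(1))
  have lim: "\<And>B c. (\<lambda>N. measure M {\<omega> \<in> space M. \<forall>t\<in>{- int N - c .. int N - c}. I t \<omega> = (t\<in>B)})
     \<longlonglongrightarrow> measure M {\<omega> \<in> space M. \<forall>t\<in>UNIV. I t \<omega> = (t\<in>B)}"
  proof -
    fix B :: "int set" and c :: int
    let ?E = "\<lambda>N::nat. {\<omega> \<in> space M. \<forall>t\<in>{- int N - c .. int N - c}. I t \<omega> = (t\<in>B)}"
    have "range ?E \<subseteq> sets M" using ev_sets[where X=I and M=M, OF Xm] by auto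
    moreover have "decseq ?E" unfolding decseq_def by (intro allI impI subsetI) auto
    ultimately have "(\<lambda>N. measure M (?E N)) \<longlonglongrightarrow> measure M (\<Inter>N. ?E N)"
      by (rule P.finite_Lim_measure_decseq)
    moreover have "(\<Inter>N. ?E N) = {\<omega> \<in> space M. \<forall>t\<in>UNIV. I t \<omega> = (t\<in>B)}"
    proof (intro set_eqI iffI)
      fix \<omega> assume a: "\<omega> \<in> (\<Inter>N. ?E N)"
      show "\<omega> \<in> {\<omega> \<in> space M. \<forall>t\<in>UNIV. I t \<omega> = (t\<in>B)}"
      proof (intro CollectI conjI ballI)
        show "\<omega> \<in> space M" using a by auto
      next
        fix t :: int
        have "\<omega> \<in> ?E (nat (\<bar>t\<bar> + \<bar>c\<bar>))" using a by blast
        moreover have "t \<in> {- int (nat (\<bar>t\<bar> + \<bar>c\<bar>)) - c .. int (nat (\<bar>t\<bar> + \<bar>c\<bar>)) - c}" by auto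
        ultimately show "I t \<omega> = (t\<in>B)" by blast
      qed
    qed auto
    ultimately show "?thesis B c" by (simp only:)
  qed
  show ?thesis
  proof (intro conjI allI impI)
    fix A :: "int set" and a :: int
    assume h: "0 \<in> A" "a \<in> A"
    define k where "k = nat \<bar>a\<bar>"
    have L1: "(\<lambda>N. measure M {\<omega> \<in> space M. \<forall>t\<in>{- int (N + k) - 0 .. int (N + k) - 0}. I t \<omega> = (t\<in>A)})
       \<longlonglongrightarrow> measure M {\<omega> \<in> space M. \<forall>t\<in>UNIV. I t \<omega> = (t\<in>A)}"
      using LIMSEQ_ignore_initial_segment[OF lim[of 0 A], of k] .
    have L2: "(\<lambda>N. measure M {\<omega> \<in> space M. \<forall>t\<in>{- int (N + k) - a .. int (N + k) - a}. I t \<omega> = (t\<in>shift_set A a)})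
       \<longlonglongrightarrow> measure M {\<omega> \<in> space M. \<forall>t\<in>UNIV. I t \<omega> = (t\<in>shift_set A a)}"
      using LIMSEQ_ignore_initial_segment[OF lim[of a "shift_set A a"], of k] .
    have eq: "\<And>N. measure M {\<omega> \<in> space M. \<forall>t\<in>{- int (N + k) - 0 .. int (N + k) - 0}. I t \<omega> = (t\<in>A)}
       = measure M {\<omega> \<in> space M. \<forall>t\<in>{- int (N + k) - a .. int (N + k) - a}. I t \<omega> = (t\<in>shift_set A a)}"
    proof -
      fix N
      have aN: "a \<in> {- int (N + k) .. int (N + k)}" unfolding k_def by auto
      have e0: "{- int (N + k) - 0 .. int (N + k) - 0} = {- int (N + k) .. int (N + k)}" by simp
      have "- int (N + k) \<le> 0" "0 \<le> int (N + k)" by simp_all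
      from B[OF h(1) this h(2) aN] show "?thesis N" by (simp only: e0)
    qed
    have "measure M {\<omega> \<in> space M. \<forall>t\<in>UNIV. I t \<omega> = (t\<in>A)} =
          measure M {\<omega> \<in> space M. \<forall>t\<in>UNIV. I t \<omega> = (t\<in>shift_set A a)}"
      using LIMSEQ_unique[OF L1[unfolded eq] L2] .
    thus "measure M {\<omega> \<in> space M. C \<omega> = A} = measure M {\<omega> \<in> space M. C \<omega> = shift_set A a}"
      by (simp only: setU)
  next
    fix A :: "int set" and a :: int and t1 t2 :: int
    assume "0 \<in> A" "t1 \<le> 0" "0 \<le> t2" "a \<in> A \<inter> {t1..t2}"
    hence "measure M {\<omega> \<in> space M. \<forall>t\<in>{t1..t2}. I t \<omega> = (t\<in>A)} =
            measure M {\<omega> \<in> space M. \<forall>t\<in>{t1-a..t2-a}. I t \<omega> = (t\<in>shift_set A a)}"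
      using B by blast
    thus "measure M {\<omega> \<in> space M. C \<omega> \<inter> {t1..t2} = A \<inter> {t1..t2}} =
            measure M {\<omega> \<in> space M. C \<omega> \<inter> {t1 - a..t2 - a} = shift_set A a \<inter> {t1 - a..t2 - a}}"
      by (simp only: setJ)
  qed
qed

end
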